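(* Let $k>0$ and let $p(n,j;k),q(n,j;k)$ be as in the context. Define $P_n(x;k)=\sum_{j=0}^{\lfloor (n-1)/2\rfloor}p(n,j;k)x^j(1+x)^{n-1-2j}$ and $Q_n(x;k)=\sum_{j=0}^{\lfloor n/2\rfloor}q(n,j;k)x^j(1+x)^{n-2j}$, so $P_0(x;k)=0$, $Q_0(x;k)=1$. Then for $n\ge0$ (terms with factor $n$ being $0$ when $n=0$) $$P_{n+1}(x;k)=(1+(2kn-2k+1)x)P_n(x;k)+2kx(1-x)P_n'(x;k)+2knxP_{n-1}(x;k)+Q_n(x;k),$$ $$Q_{n+1}(x;k)=2knxQ_n(x;k)+2kx(1-x)Q_n'(x;k)+2knxQ_{n-1}(x;k)+(2k-1)xP_n(x;k),$$ where $'$ denotes $d/dx$.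
   Context: The numbers $p(n,j;k),q(n,j;k)$ ($n\ge0$, $j\in\mathbb{Z}$) are determined by $q(0,0;k)=1$, $q(0,j;k)=0$ for $j\ne0$, $p(0,j;k)=0$ for all $j$, $p(n,j;k)=q(n,j;k)=0$ for $j<0$, and for $n\ge0$: $p(n+1,j;k)=(1+2kj)p(n,j;k)+4k(n-2j+1)p(n,j-1;k)+2kn\,p(n-1,j-1;k)+q(n,j;k)$ and $q(n+1,j;k)=2kj\,q(n,j;k)+4k(n-2j+2)q(n,j-1;k)+2kn\,q(n-1,j-1;k)+(2k-1)p(n,j-1;k)$ (terms with factor $n$ vanish when $n=0$). *)

theory Defs
  imports "HOL-Analysis.Analysis"
begin

fun pp :: "real \<Rightarrow> nat \<Rightarrow> int \<Rightarrow> real"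
and qq :: "real \<Rightarrow> nat \<Rightarrow> int \<Rightarrow> real" where
  "pp k 0 j = 0"
| "qq k 0 j = (if j = 0 then 1 else 0)"
| "pp k (Suc n) j = (if j < 0 then 0 else
      (1 + 2*k * of_int j) * pp k n j + 4*k*(real n - 2 * of_int j + 1) * pp k n (j-1)
      + 2*k*real n * pp k (n-1) (j-1) + qq k n j)"
| "qq k (Suc n) j = (if j < 0 then 0 else
      2*k * of_int j * qq k n j + 4*k*(real n - 2 * of_int j + 2) * qq k n (j-1)
      + 2*k*real n * qq k (n-1) (j-1) + (2*k-1) * pp k n (j-1))"

definition PP :: "real \<Rightarrow> nat \<Rightarrow> real \<Rightarrow> real" where
  "PP k n x = (\<Sum>j\<in>{0..(int n - 1) div 2}.
      pp k n j * x ^ nat j * (1 + x) ^ nat (int n - 1 - 2*j))"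

definition QQ :: "real \<Rightarrow> nat \<Rightarrow> real \<Rightarrow> real" where
  "QQ k n x = (\<Sum>j\<in>{0..int n div 2}.
      qq k n j * x ^ nat j * (1 + x) ^ nat (int n - 2*j))"

end

theory Submission
  imports Defs
begin

lemma neg0: "j < 0 \<Longrightarrow> pp k n j = 0 \<and> qq k n j = 0"
  by (cases n) auto

lemma supp: "\<forall>j. (2*j > int n - 1 \<longrightarrow> pp k n j = 0) \<and> (2*j > int n \<longrightarrow> qq k n j = 0)"
proof (induction n rule: less_induct)
  case (less n)
  show ?case
  proof (cases n)
    case 0 then show ?thesis by auto
  next
    case (Suc m)
    show ?thesis
    proof (intro allI conjI impI)
      fix j :: int
      assume h: "2*j > int n - 1"
      show "pp k n j = 0"
      proof (cases "j < 0")
        case True then show ?thesis using neg0 by blast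
      next
        case False
        have a: "pp k m j = 0" using less[of m] Suc h by auto
        have b: "(real m - 2 * of_int j + 1) * pp k m (j-1) = 0"
        proof (cases "2*j = int m + 1")
          case True then have "real m - 2 * of_int j + 1 = 0"
            using arg_cong[OF True, of real_of_int] by simp
          then show ?thesis by simp
        next
          case False then show ?thesis using less[of m] Suc h by auto
        qed
        have c: "real m * pp k (m-1) (j-1) = 0"
          using less[of "m-1"] Suc h by (cases m) auto
        have d: "qq k m j = 0" using less[of m] Suc h by auto
        show ?thesis using Suc False a b c d
          by auto
      qed
    next
      fix j :: int
      assume h: "2*j > int n"
      show "qq k n j = 0"
      proof (cases "j < 0")
        case True then show ?thesis using neg0 by blast
      next
        case False
        have a: "qq k m j = 0" using less[of m] Suc h by auto
        have b: "(real m - 2 * of_int j + 2) * qq k m (j-1) = 0"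
        proof (cases "2*j = int m + 2")
          case True then have "real m - 2 * of_int j + 2 = 0"
            using arg_cong[OF True, of real_of_int] by simp
          then show ?thesis by simp
        next
          case False then show ?thesis using less[of m] Suc h by auto
        qed
        have c: "real m * qq k (m-1) (j-1) = 0"
          using less[of "m-1"] Suc h by (cases m) auto
        have d: "pp k m (j-1) = 0" using less[of m] Suc h by auto
        show ?thesis using Suc False a b c d
          by auto
      qed
    qed
  qed
qed

lemma sum_int_nat:
  fixes f :: "int \<Rightarrow> real"
  assumes "-1 \<le> M" "M < int N" "\<And>i. M < int i \<Longrightarrow> i < N \<Longrightarrow> f (int i) = 0"
  shows "sum f {0..M} = (\<Sum>i<N. f (int i))"
proof -
  have e: "{0..M} = int ` {..<nat (M+1)}"
    using assms(1) by (auto simp: image_iff intro!: bexI[of _ "nat _"])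
  have "sum f {0..M} = (\<Sum>i<nat (M+1). f (int i))"
    unfolding e by (subst sum.reindex) auto
  also have "\<dots> = (\<Sum>i<N. f (int i))"
    by (rule sum.mono_neutral_left) (use assms in auto)
  finally show ?thesis .
qed


lemma PP_rep:
  assumes "m < N"
  shows "PP k m x = (\<Sum>i<N. pp k m (int i) * x^i * (1+x)^(m-1-2*i))"
proof -
  have "PP k m x = (\<Sum>i<N. pp k m (int i) * x ^ nat (int i) * (1 + x) ^ nat (int m - 1 - 2*int i))"
    unfolding PP_def
  proof (rule sum_int_nat)
    fix i assume "(int m - 1) div 2 < int i"
    then have "2 * int i > int m - 1" by linarith
    then show "pp k m (int i) * x ^ nat (int i) * (1 + x) ^ nat (int m - 1 - 2 * int i) = 0"
      using supp[of m k] by auto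
  qed (use assms in auto)
  also have "\<dots> = (\<Sum>i<N. pp k m (int i) * x^i * (1+x)^(m-1-2*i))"
  proof -
    have h: "\<And>i. nat (int m - 1 - 2*int i) = m-1-2*i" by arith
    show ?thesis by (simp only: h nat_int)
  qed
  finally show ?thesis .
qed

lemma QQ_rep:
  assumes "m < N"
  shows "QQ k m x = (\<Sum>i<N. qq k m (int i) * x^i * (1+x)^(m-2*i))"
proof -
  have "QQ k m x = (\<Sum>i<N. qq k m (int i) * x ^ nat (int i) * (1 + x) ^ nat (int m - 2*int i))"
    unfolding QQ_def
  proof (rule sum_int_nat)
    fix i assume "int m div 2 < int i"
    then have "2 * int i > int m" by linarith
    then show "qq k m (int i) * x ^ nat (int i) * (1 + x) ^ nat (int m - 2 * int i) = 0"
      using supp[of m k] by auto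
  qed (use assms in auto)
  also have "\<dots> = (\<Sum>i<N. qq k m (int i) * x^i * (1+x)^(m-2*i))"
  proof -
    have h: "\<And>i. nat (int m - 2*int i) = m-2*i" by arith
    show ?thesis by (simp only: h nat_int)
  qed
  finally show ?thesis .
qed

lemma deriv_rep:
  fixes c :: "nat \<Rightarrow> real" and e :: "nat \<Rightarrow> nat"
  shows "deriv (\<lambda>x. \<Sum>i<N. c i * x^i * (1+x)^(e i)) x =
     (\<Sum>i<N. c i * (real i * x^(i-1) * (1+x)^(e i) + real (e i) * x^i * (1+x)^(e i - 1)))"
proof (rule DERIV_imp_deriv)
  show "((\<lambda>x. \<Sum>i<N. c i * x^i * (1+x)^(e i)) has_field_derivative
     (\<Sum>i<N. c i * (real i * x^(i-1) * (1+x)^(e i) + real (e i) * x^i * (1+x)^(e i - 1)))) (at x)"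
    by (rule DERIV_sum) (auto intro!: derivative_eq_intros simp: algebra_simps)
qed


lemma keyP:
  fixes x k :: real and j e n :: nat
  assumes "n = e + 2*j + 1"
  shows "(1 + (2*k*real n - 2*k + 1)*x) * (x^j * (1+x)^e)
      + 2*k*x*(1-x) * (real j * x^(j-1) * (1+x)^e + real e * x^j * (1+x)^(e-1))
    = (1 + 2*k*real j) * (x^j * (1+x)^(e+1)) + 4*k*real e * (x^(Suc j) * (1+x)^(e-1))"
proof (cases e)
  case 0
  then show ?thesis using assms by (cases j) (simp_all add: algebra_simps)
next
  case (Suc e')
  then show ?thesis using assms by (cases j) (simp_all add: algebra_simps)
qed

lemma keyQ:
  fixes x k :: real and j f n :: nat
  assumes "n = f + 2*j"
  shows "2*k*real n*x * (x^j * (1+x)^f)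
      + 2*k*x*(1-x) * (real j * x^(j-1) * (1+x)^f + real f * x^j * (1+x)^(f-1))
    = 2*k*real j * (x^j * (1+x)^(f+1)) + 4*k*real f * (x^(Suc j) * (1+x)^(f-1))"
proof (cases f)
  case 0
  then show ?thesis using assms by (cases j) (simp_all add: algebra_simps)
next
  case (Suc f')
  then show ?thesis using assms by (cases j) (simp_all add: algebra_simps)
qed


lemma lin:
  fixes c1 c2 c3 u1 u2 u3 u4 u5 u6 u7 u8 :: real
  shows "c1*(u1*u2) + c2*(u1*u3) + c3*u4*(u5*u6) + u7*u8 = u1*(c1*u2 + c2*u3) + c3*u5*(u4*u6) + u7*u8"
  by (simp add: algebra_simps)

lemma lin2:
  fixes u u' b c k j e X Y :: real
  shows "u*((1+2*k*j)*Y + 4*k*e*X) + c*u'*X + b*Y = ((1+2*k*j)*u + b)*Y + (4*k*e*u + c*u')*X"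
  by (simp add: algebra_simps)

lemma P_part:
  fixes k x :: real and n :: nat
  shows "PP k (Suc n) x = (1 + (2*k*real n - 2*k + 1)*x) * PP k n x
            + 2*k*x*(1-x) * deriv (PP k n) x + 2*k*real n*x * PP k (n-1) x + QQ k n x"
proof -
  define N where "N = n + 3"
  define y where "y = 1 + x"
  define A where "A i = pp k n (int i)" for i
  define A' where "A' i = pp k (n-1) (int i)" for i
  define B where "B i = qq k n (int i)" for i
  define U where "U i = ((1 + 2*k*real i) * A i + B i) * (x^i * y^(n-2*i))" for i
  define V where "V i = (4*k*(real n - 1 - 2*real i) * A i + 2*k*real n * A' i) * (x^(Suc i) * y^(n-2-2*i))" for i
  define W where "W i = (4*k*(real n - 2*real i + 1) * pp k n (int i - 1)
       + 2*k*real n * pp k (n-1) (int i - 1)) * (x^i * y^(n-2*i))" for i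
  have PPf: "PP k n = (\<lambda>x. \<Sum>i<N. pp k n (int i) * x^i * (1+x)^(n-1-2*i))"
    by (rule ext, rule PP_rep) (simp add: N_def)
  have D: "deriv (PP k n) x = (\<Sum>i<N. A i * (real i * x^(i-1) * y^(n-1-2*i) + real (n-1-2*i) * x^i * y^(n-1-2*i - 1)))"
    unfolding PPf A_def y_def by (rule deriv_rep)
  have P1: "PP k n x = (\<Sum>i<N. A i * (x^i * y^(n-1-2*i)))"
    by (subst PP_rep[of n N]) (simp_all add: N_def A_def y_def mult.assoc)
  have P2: "PP k (n-1) x = (\<Sum>i<N. A' i * (x^i * y^(n-1-1-2*i)))"
    by (subst PP_rep[of "n-1" N]) (simp_all add: N_def A'_def y_def mult.assoc)
  have Q1: "QQ k n x = (\<Sum>i<N. B i * (x^i * y^(n-2*i)))"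
    by (subst QQ_rep[of n N]) (simp_all add: N_def B_def y_def mult.assoc)
  have R: "(1 + (2*k*real n - 2*k + 1)*x) * PP k n x
            + 2*k*x*(1-x) * deriv (PP k n) x + 2*k*real n*x * PP k (n-1) x + QQ k n x
        = (\<Sum>i<N. U i + V i)"
  proof -
    have "(1 + (2*k*real n - 2*k + 1)*x) * PP k n x
            + 2*k*x*(1-x) * deriv (PP k n) x + 2*k*real n*x * PP k (n-1) x + QQ k n x
       = (\<Sum>i<N. A i * ((1 + (2*k*real n - 2*k + 1)*x) * (x^i * y^(n-1-2*i))
            + 2*k*x*(1-x) * (real i * x^(i-1) * y^(n-1-2*i) + real (n-1-2*i) * x^i * y^(n-1-2*i - 1)))
            + 2*k*real n * A' i * (x^(Suc i) * y^(n-2-2*i)) + B i * (x^i * y^(n-2*i)))"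
    proof -
      have "(1 + (2*k*real n - 2*k + 1)*x) * (\<Sum>i<N. A i * (x^i * y^(n-1-2*i)))
          + 2*k*x*(1-x) * (\<Sum>i<N. A i * (real i * x^(i-1) * y^(n-1-2*i) + real (n-1-2*i) * x^i * y^(n-1-2*i - 1)))
          + 2*k*real n*x * (\<Sum>i<N. A' i * (x^i * y^(n-1-1-2*i))) + (\<Sum>i<N. B i * (x^i * y^(n-2*i)))
        = (\<Sum>i<N. (1 + (2*k*real n - 2*k + 1)*x) * (A i * (x^i * y^(n-1-2*i)))
          + 2*k*x*(1-x) * (A i * (real i * x^(i-1) * y^(n-1-2*i) + real (n-1-2*i) * x^i * y^(n-1-2*i - 1)))
          + 2*k*real n*x * (A' i * (x^i * y^(n-1-1-2*i))) + B i * (x^i * y^(n-2*i)))"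
        by (simp only: sum.distrib sum_distrib_left)
      also have "\<dots> = (\<Sum>i<N. A i * ((1 + (2*k*real n - 2*k + 1)*x) * (x^i * y^(n-1-2*i))
            + 2*k*x*(1-x) * (real i * x^(i-1) * y^(n-1-2*i) + real (n-1-2*i) * x^i * y^(n-1-2*i - 1)))
            + 2*k*real n * A' i * (x^(Suc i) * y^(n-2-2*i)) + B i * (x^i * y^(n-2*i)))"
      proof (rule sum.cong[OF refl])
        fix i
        have "n-1-1-2*i = n-2-2*i" by simp
        then show "(1 + (2*k*real n - 2*k + 1)*x) * (A i * (x^i * y^(n-1-2*i)))
          + 2*k*x*(1-x) * (A i * (real i * x^(i-1) * y^(n-1-2*i) + real (n-1-2*i) * x^i * y^(n-1-2*i - 1)))
          + 2*k*real n*x * (A' i * (x^i * y^(n-1-1-2*i))) + B i * (x^i * y^(n-2*i))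
          = A i * ((1 + (2*k*real n - 2*k + 1)*x) * (x^i * y^(n-1-2*i))
            + 2*k*x*(1-x) * (real i * x^(i-1) * y^(n-1-2*i) + real (n-1-2*i) * x^i * y^(n-1-2*i - 1)))
            + 2*k*real n * A' i * (x^(Suc i) * y^(n-2-2*i)) + B i * (x^i * y^(n-2*i))"
          by (simp only: power_Suc lin)
      qed
      finally show ?thesis by (simp only: P1 P2 Q1 D)
    qed
    also have "\<dots> = (\<Sum>i<N. U i + V i)"
    proof (rule sum.cong[OF refl])
      fix i assume "i \<in> {..<N}"
      show "A i * ((1 + (2*k*real n - 2*k + 1)*x) * (x^i * y^(n-1-2*i))
            + 2*k*x*(1-x) * (real i * x^(i-1) * y^(n-1-2*i) + real (n-1-2*i) * x^i * y^(n-1-2*i - 1)))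
            + 2*k*real n * A' i * (x^(Suc i) * y^(n-2-2*i)) + B i * (x^i * y^(n-2*i)) = U i + V i"
      proof (cases "A i = 0")
        case True
        then show ?thesis unfolding U_def V_def by (simp add: algebra_simps)
      next
        case False
        then have "\<not> (2 * int i > int n - 1)" using supp[of n k] unfolding A_def by blast
        then have ni: "n = (n-1-2*i) + 2*i + 1" by linarith
        obtain e where ne: "n = e + 2*i + 1" using ni by blast
        have s1: "n-1-2*i = e" "n-2*i = e+1" "n-2-2*i = e-1" "real n - 1 - 2*real i = real e"
          using ne by auto
        note K = keyP[OF ne, of k x]
        show ?thesis
          unfolding U_def V_def s1 y_def K by (rule lin2)
      qed
    qed
    finally show ?thesis .
  qed
  have A1: "pp k (Suc n) (int i) * x^i * (1+x)^(Suc n - 1 - 2*i) = U i + W i" for i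
    unfolding U_def W_def A_def B_def y_def by (simp add: algebra_simps)
  have L: "PP k (Suc n) x = (\<Sum>i<Suc N. U i + W i)"
  proof -
    have "PP k (Suc n) x = (\<Sum>i<Suc N. pp k (Suc n) (int i) * x^i * (1+x)^(Suc n - 1 - 2*i))"
      by (rule PP_rep) (simp add: N_def)
    also have "\<dots> = (\<Sum>i<Suc N. U i + W i)"
      by (rule sum.cong[OF refl]) (rule A1)
    finally show ?thesis .
  qed
  have UN: "U N = 0"
  proof -
    have "A N = 0" "B N = 0" using supp[of n k] unfolding A_def B_def N_def by auto
    then show ?thesis unfolding U_def by simp
  qed
  have W0: "W 0 = 0" unfolding W_def using neg0[of "-1" k n] neg0[of "-1" k "n-1"] by simp
  have WS: "W (Suc i) = V i" for i
  proof -
    have "n - 2 * Suc i = n-2-2*i" by simp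
    then show ?thesis unfolding W_def V_def A_def A'_def by (simp add: algebra_simps)
  qed
  have "(\<Sum>i<Suc N. U i + W i) = (\<Sum>i<Suc N. U i) + (\<Sum>i<Suc N. W i)" by (simp add: sum.distrib)
  also have "\<dots> = (\<Sum>i<N. U i) + (\<Sum>i<N. V i)"
  proof -
    have "(\<Sum>i<Suc N. U i) = (\<Sum>i<N. U i)" using UN by simp
    moreover have "(\<Sum>i<Suc N. W i) = (\<Sum>i<N. V i)"
      by (simp only: sum.lessThan_Suc_shift W0 WS add_0_left)
    ultimately show ?thesis by simp
  qed
  also have "\<dots> = (\<Sum>i<N. U i + V i)" by (simp add: sum.distrib)
  finally show ?thesis using L R by simp
qed


lemma lin3:
  fixes c1 c2 c3 c4 u1 u2 u3 u4 u5 u6 u7 :: real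
  shows "c1*(u1*u2) + c2*(u1*u3) + c3*u4*(u5*u6) + c4*u4*(u7*u6)
     = u1*(c1*u2 + c2*u3) + c3*u5*(u4*u6) + c4*u7*(u4*u6)"
  by (simp add: algebra_simps)

lemma lin4:
  fixes u u' a c d k j f X Y :: real
  shows "u*(2*k*j*Y + 4*k*f*X) + c*u'*X + d*a*X = 2*k*j*u*Y + (4*k*f*u + c*u' + d*a)*X"
  by (simp add: algebra_simps)

lemma Q_part:
  fixes k x :: real and n :: nat
  shows "QQ k (Suc n) x = 2*k*real n*x * QQ k n x
            + 2*k*x*(1-x) * deriv (QQ k n) x + 2*k*real n*x * QQ k (n-1) x
            + (2*k-1)*x * PP k n x"
proof -
  define N where "N = n + 3"
  define y where "y = 1 + x"
  define A where "A i = pp k n (int i)" for i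
  define B' where "B' i = qq k (n-1) (int i)" for i
  define B where "B i = qq k n (int i)" for i
  define U where "U i = 2*k*real i * B i * (x^i * y^(Suc n-2*i))" for i
  define V where "V i = (4*k*(real n - 2*real i) * B i + 2*k*real n * B' i + (2*k-1) * A i) * (x^(Suc i) * y^(n-1-2*i))" for i
  define W where "W i = (4*k*(real n - 2*real i + 2) * qq k n (int i - 1)
       + 2*k*real n * qq k (n-1) (int i - 1) + (2*k-1) * pp k n (int i - 1)) * (x^i * y^(Suc n-2*i))" for i
  have QQf: "QQ k n = (\<lambda>x. \<Sum>i<N. qq k n (int i) * x^i * (1+x)^(n-2*i))"
    by (rule ext, rule QQ_rep) (simp add: N_def)
  have D: "deriv (QQ k n) x = (\<Sum>i<N. B i * (real i * x^(i-1) * y^(n-2*i) + real (n-2*i) * x^i * y^(n-2*i - 1)))"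
    unfolding QQf B_def y_def by (rule deriv_rep)
  have P1: "PP k n x = (\<Sum>i<N. A i * (x^i * y^(n-1-2*i)))"
    by (subst PP_rep[of n N]) (simp_all add: N_def A_def y_def mult.assoc)
  have Q2: "QQ k (n-1) x = (\<Sum>i<N. B' i * (x^i * y^(n-1-2*i)))"
    by (subst QQ_rep[of "n-1" N]) (simp_all add: N_def B'_def y_def mult.assoc)
  have Q1: "QQ k n x = (\<Sum>i<N. B i * (x^i * y^(n-2*i)))"
    by (subst QQ_rep[of n N]) (simp_all add: N_def B_def y_def mult.assoc)
  have R: "2*k*real n*x * QQ k n x
            + 2*k*x*(1-x) * deriv (QQ k n) x + 2*k*real n*x * QQ k (n-1) x
            + (2*k-1)*x * PP k n x
        = (\<Sum>i<N. U i + V i)"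
  proof -
    have "2*k*real n*x * (\<Sum>i<N. B i * (x^i * y^(n-2*i)))
          + 2*k*x*(1-x) * (\<Sum>i<N. B i * (real i * x^(i-1) * y^(n-2*i) + real (n-2*i) * x^i * y^(n-2*i - 1)))
          + 2*k*real n*x * (\<Sum>i<N. B' i * (x^i * y^(n-1-2*i)))
          + (2*k-1)*x * (\<Sum>i<N. A i * (x^i * y^(n-1-2*i)))
        = (\<Sum>i<N. 2*k*real n*x * (B i * (x^i * y^(n-2*i)))
          + 2*k*x*(1-x) * (B i * (real i * x^(i-1) * y^(n-2*i) + real (n-2*i) * x^i * y^(n-2*i - 1)))
          + 2*k*real n*x * (B' i * (x^i * y^(n-1-2*i)))
          + (2*k-1)*x * (A i * (x^i * y^(n-1-2*i))))"
      by (simp only: sum.distrib sum_distrib_left)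
    also have "\<dots> = (\<Sum>i<N. B i * (2*k*real n*x * (x^i * y^(n-2*i))
          + 2*k*x*(1-x) * (real i * x^(i-1) * y^(n-2*i) + real (n-2*i) * x^i * y^(n-2*i - 1)))
          + 2*k*real n * B' i * (x^(Suc i) * y^(n-1-2*i))
          + (2*k-1) * A i * (x^(Suc i) * y^(n-1-2*i)))"
      by (rule sum.cong[OF refl]) (simp only: power_Suc lin3)
    also have "\<dots> = (\<Sum>i<N. U i + V i)"
    proof (rule sum.cong[OF refl])
      fix i assume "i \<in> {..<N}"
      show "B i * (2*k*real n*x * (x^i * y^(n-2*i))
          + 2*k*x*(1-x) * (real i * x^(i-1) * y^(n-2*i) + real (n-2*i) * x^i * y^(n-2*i - 1)))
          + 2*k*real n * B' i * (x^(Suc i) * y^(n-1-2*i))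
          + (2*k-1) * A i * (x^(Suc i) * y^(n-1-2*i)) = U i + V i"
      proof (cases "B i = 0")
        case True
        then show ?thesis unfolding U_def V_def by (simp add: algebra_simps)
      next
        case False
        then have "\<not> (2 * int i > int n)" using supp[of n k] unfolding B_def by blast
        then have ni: "n = (n-2*i) + 2*i" by linarith
        obtain f where nf: "n = f + 2*i" using ni by blast
        have s1: "n-2*i = f" "Suc n-2*i = f+1" "n-1-2*i = f-1" "real n - 2*real i = real f"
          using nf by auto
        note K = keyQ[OF nf, of k x]
        show ?thesis
          unfolding U_def V_def s1 y_def K by (rule lin4)
      qed
    qed
    finally show ?thesis by (simp only: P1 Q1 Q2 D)
  qed
  have A1: "qq k (Suc n) (int i) * x^i * (1+x)^(Suc n - 2*i) = U i + W i" for i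
    unfolding U_def W_def A_def B_def y_def by (simp add: algebra_simps)
  have L: "QQ k (Suc n) x = (\<Sum>i<Suc N. U i + W i)"
  proof -
    have "QQ k (Suc n) x = (\<Sum>i<Suc N. qq k (Suc n) (int i) * x^i * (1+x)^(Suc n - 2*i))"
      by (rule QQ_rep) (simp add: N_def)
    also have "\<dots> = (\<Sum>i<Suc N. U i + W i)"
      by (rule sum.cong[OF refl]) (rule A1)
    finally show ?thesis .
  qed
  have UN: "U N = 0"
  proof -
    have "B N = 0" using supp[of n k] unfolding B_def N_def by auto
    then show ?thesis unfolding U_def by simp
  qed
  have W0: "W 0 = 0" unfolding W_def using neg0[of "-1" k n] neg0[of "-1" k "n-1"] by simp
  have WS: "W (Suc i) = V i" for i
  proof -
    have "Suc n - 2 * Suc i = n-1-2*i" by simp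
    then show ?thesis unfolding W_def V_def A_def B_def B'_def by (simp add: algebra_simps)
  qed
  have "(\<Sum>i<Suc N. U i + W i) = (\<Sum>i<Suc N. U i) + (\<Sum>i<Suc N. W i)" by (simp add: sum.distrib)
  also have "\<dots> = (\<Sum>i<N. U i) + (\<Sum>i<N. V i)"
  proof -
    have "(\<Sum>i<Suc N. U i) = (\<Sum>i<N. U i)" using UN by simp
    moreover have "(\<Sum>i<Suc N. W i) = (\<Sum>i<N. V i)"
      by (simp only: sum.lessThan_Suc_shift W0 WS add_0_left)
    ultimately show ?thesis by simp
  qed
  also have "\<dots> = (\<Sum>i<N. U i + V i)" by (simp add: sum.distrib)
  finally show ?thesis using L R by simp
qed

theorem corollary14:
  fixes k x :: real and n :: nat
  assumes "k > 0"
  shows "PP k (Suc n) x = (1 + (2*k*real n - 2*k + 1)*x) * PP k n x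
            + 2*k*x*(1-x) * deriv (PP k n) x + 2*k*real n*x * PP k (n-1) x + QQ k n x
       \<and> QQ k (Suc n) x = 2*k*real n*x * QQ k n x
            + 2*k*x*(1-x) * deriv (QQ k n) x + 2*k*real n*x * QQ k (n-1) x
            + (2*k-1)*x * PP k n x"
  using P_part Q_part by blast

end
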